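(* Let $(\mathcal{K},[\cdot,\cdot])$ be a Krein space with fundamental symmetry $J$, and let $\{k_n\}_{n\in\mathbb{N}}$ be a sequence in $\mathcal{K}$. Let $0<A\leq B<\infty$. The following statements are equivalent: (i) $\{k_n\}_{n\in\mathbb{N}}$ is a frame for the Krein space $\mathcal{K}$ with frame bounds $A\leq B$; (ii) $\{Jk_n\}_{n\in\mathbb{N}}$ is a frame for the Krein space $\mathcal{K}$ with frame bounds $A\leq B$; (iii) $\{k_n\}_{n\in\mathbb{N}}$ is a frame for the Hilbert space $(\mathcal{K},[\cdot,\cdot]_J)$ with frame bounds $A\leq B$; (iv) $\{Jk_n\}_{n\in\mathbb{N}}$ is a frame for the Hilbert space $(\mathcal{K},[\cdot,\cdot]_J)$ with frame bounds $A\leq B$.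
   Context: A Krein space $(\mathcal{K},[\cdot,\cdot])$ has a fundamental decomposition $\mathcal{K}=\mathcal{K}_+\oplus\mathcal{K}_-$ and fundamental symmetry $J(k^++k^-)=k^+-k^-$ ($k^\pm\in\mathcal{K}_\pm$), such that $[h,k]_J:=[h,Jk]$ is a positive definite inner product making $(\mathcal{K},[\cdot,\cdot]_J)$ a Hilbert space; $\|k\|_J:=\sqrt{[k,k]_J}$. A countable sequence $\{k_n\}$ in a Krein space $\mathcal{K}$ is a frame for the Krein space $\mathcal{K}$ with frame bounds $0<A\leq B<\infty$ if $A\|k\|_J^2\leq\sum_n|[k_n,k]|^2\leq B\|k\|_J^2$ for all $k\in\mathcal{K}$. A frame for a Hilbert space $(\mathcal{H},\langle\cdot,\cdot\rangle)$ with frame bounds $A\le B$ is a sequence $\{f_n\}$ with $A\|f\|^2\leq\sum_n|\langle f_n,f\rangle|^2\leq B\|f\|^2$ for all $f\in\mathcal{H}$. *)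

theory Defs
  imports "HOL-Analysis.Analysis"
begin

text \<open>The Krein space is the whole type 'a, a complex vector space with scalar
  multiplication sc (assumption vector_space sc).\<close>
definition hermitian_form :: "(complex \<Rightarrow> 'a \<Rightarrow> 'a) \<Rightarrow> ('a::ab_group_add \<Rightarrow> 'a \<Rightarrow> complex) \<Rightarrow> bool" where
  "hermitian_form sc ip \<longleftrightarrow>
     (\<forall>x y z. ip (x + y) z = ip x z + ip y z) \<and>
     (\<forall>(c::complex) x z. ip (sc c x) z = c * ip x z) \<and>
     (\<forall>x y. ip x y = cnj (ip y x))"

definition complex_subspace :: "(complex \<Rightarrow> 'a \<Rightarrow> 'a) \<Rightarrow> 'a::ab_group_add set \<Rightarrow> bool" where
  "complex_subspace sc S \<longleftrightarrow> 0 \<in> S \<and> (\<forall>x\<in>S. \<forall>y\<in>S. x + y \<in> S) \<and>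
     (\<forall>(c::complex). \<forall>x\<in>S. sc c x \<in> S)"

definition fundamental_decomposition ::
  "(complex \<Rightarrow> 'a \<Rightarrow> 'a) \<Rightarrow> ('a::ab_group_add \<Rightarrow> 'a \<Rightarrow> complex) \<Rightarrow> 'a set \<Rightarrow> 'a set \<Rightarrow> bool" where
  "fundamental_decomposition sc ip Kp Km \<longleftrightarrow>
     complex_subspace sc Kp \<and> complex_subspace sc Km \<and>
     Kp \<inter> Km = {0} \<and> (\<forall>x. \<exists>p\<in>Kp. \<exists>m\<in>Km. x = p + m) \<and>
     (\<forall>p\<in>Kp. \<forall>m\<in>Km. ip p m = 0) \<and>
     (\<forall>p\<in>Kp. p \<noteq> 0 \<longrightarrow> Re (ip p p) > 0) \<and>
     (\<forall>m\<in>Km. m \<noteq> 0 \<longrightarrow> Re (ip m m) < 0)"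

definition fund_sym :: "'a set \<Rightarrow> 'a set \<Rightarrow> 'a::ab_group_add \<Rightarrow> 'a" where
  "fund_sym Kp Km x = (THE y. \<exists>p\<in>Kp. \<exists>m\<in>Km. x = p + m \<and> y = p - m)"

definition J_inner :: "('a::ab_group_add \<Rightarrow> 'a \<Rightarrow> complex) \<Rightarrow> 'a set \<Rightarrow> 'a set \<Rightarrow> 'a \<Rightarrow> 'a \<Rightarrow> complex" where
  "J_inner ip Kp Km h k = ip h (fund_sym Kp Km k)"

definition J_norm :: "('a::ab_group_add \<Rightarrow> 'a \<Rightarrow> complex) \<Rightarrow> 'a set \<Rightarrow> 'a set \<Rightarrow> 'a \<Rightarrow> real" where
  "J_norm ip Kp Km k = sqrt (Re (J_inner ip Kp Km k k))"

definition krein_space :: "(complex \<Rightarrow> 'a \<Rightarrow> 'a) \<Rightarrow> ('a::ab_group_add \<Rightarrow> 'a \<Rightarrow> complex) \<Rightarrow> 'a set \<Rightarrow> 'a set \<Rightarrow> bool" where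
  "krein_space sc ip Kp Km \<longleftrightarrow>
     vector_space sc \<and> hermitian_form sc ip \<and> fundamental_decomposition sc ip Kp Km \<and>
     hermitian_form sc (J_inner ip Kp Km) \<and>
     (\<forall>x. x \<noteq> 0 \<longrightarrow> Re (J_inner ip Kp Km x x) > 0) \<and>
     (\<forall>X :: nat \<Rightarrow> 'a.
        (\<forall>e>0. \<exists>N. \<forall>m\<ge>N. \<forall>n\<ge>N. J_norm ip Kp Km (X m - X n) < e) \<longrightarrow>
        (\<exists>L. (\<lambda>n. J_norm ip Kp Km (X n - L)) \<longlonglongrightarrow> 0))"

definition krein_frame ::
  "('a::ab_group_add \<Rightarrow> 'a \<Rightarrow> complex) \<Rightarrow> 'a set \<Rightarrow> 'a set \<Rightarrow> (nat \<Rightarrow> 'a) \<Rightarrow> real \<Rightarrow> real \<Rightarrow> bool" where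
  "krein_frame ip Kp Km f A B \<longleftrightarrow> 0 < A \<and> A \<le> B \<and>
     (\<forall>k. summable (\<lambda>n. (cmod (ip (f n) k))\<^sup>2) \<and>
          A * (J_norm ip Kp Km k)\<^sup>2 \<le> (\<Sum>n. (cmod (ip (f n) k))\<^sup>2) \<and>
          (\<Sum>n. (cmod (ip (f n) k))\<^sup>2) \<le> B * (J_norm ip Kp Km k)\<^sup>2)"

definition hilbert_frame ::
  "('a \<Rightarrow> 'a \<Rightarrow> complex) \<Rightarrow> (nat \<Rightarrow> 'a) \<Rightarrow> real \<Rightarrow> real \<Rightarrow> bool" where
  "hilbert_frame ip f A B \<longleftrightarrow> 0 < A \<and> A \<le> B \<and>
     (\<forall>x. summable (\<lambda>n. (cmod (ip (f n) x))\<^sup>2) \<and>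
          A * (sqrt (Re (ip x x)))\<^sup>2 \<le> (\<Sum>n. (cmod (ip (f n) x))\<^sup>2) \<and>
          (\<Sum>n. (cmod (ip (f n) x))\<^sup>2) \<le> B * (sqrt (Re (ip x x)))\<^sup>2)"

end

theory Submission
  imports Defs
begin

lemma neg_sc:
  assumes "vector_space sc" shows "sc (-1) x = - x"
proof -
  interpret vector_space sc by fact
  show ?thesis by simp
qed

lemma sub_neg:
  assumes "vector_space sc" "complex_subspace sc S" "x \<in> S" shows "- x \<in> S"
proof -
  have "sc (-1) x \<in> S" using assms(2,3) unfolding complex_subspace_def by blast
  thus ?thesis using neg_sc[OF assms(1), of x] by simp
qed

lemma sub_diff:
  assumes "vector_space sc" "complex_subspace sc S" "x \<in> S" "y \<in> S" shows "x - y \<in> S"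
proof -
  have "x + - y \<in> S" using assms(2,3) sub_neg[OF assms(1,2,4)] unfolding complex_subspace_def by blast
  thus ?thesis by simp
qed

context
  fixes sc :: "complex \<Rightarrow> 'a::ab_group_add \<Rightarrow> 'a" and ip Kp Km
  assumes K: "krein_space sc ip Kp Km"
begin

lemma vs: "vector_space sc" using K unfolding krein_space_def by simp
lemma herm: "hermitian_form sc ip" using K unfolding krein_space_def by simp
lemma fd: "fundamental_decomposition sc ip Kp Km" using K unfolding krein_space_def by simp
lemma subp: "complex_subspace sc Kp" using fd unfolding fundamental_decomposition_def by simp
lemma subm: "complex_subspace sc Km" using fd unfolding fundamental_decomposition_def by simp

lemma uniq:
  assumes "p \<in> Kp" "m \<in> Km" "p' \<in> Kp" "m' \<in> Km" "p + m = p' + m'"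
  shows "p = p' \<and> m = m'"
proof -
  have e: "p - p' = m' - m" using assms(5) by (simp add: algebra_simps)
  have "p - p' \<in> Kp" by (rule sub_diff[OF vs subp assms(1,3)])
  moreover have "m' - m \<in> Km" by (rule sub_diff[OF vs subm assms(4,2)])
  ultimately have "p - p' \<in> Kp \<inter> Km" using e by simp
  moreover have "Kp \<inter> Km = {0}" using fd unfolding fundamental_decomposition_def by (elim conjE)
  ultimately have "p - p' = 0" by blast
  thus ?thesis using e by simp
qed

lemma J_eq:
  assumes "p \<in> Kp" "m \<in> Km" shows "fund_sym Kp Km (p + m) = p - m"
  unfolding fund_sym_def
proof (rule the_equality)
  show "\<exists>p'\<in>Kp. \<exists>m'\<in>Km. p + m = p' + m' \<and> p - m = p' - m'" using assms by blast
next
  fix y assume "\<exists>p'\<in>Kp. \<exists>m'\<in>Km. p + m = p' + m' \<and> y = p' - m'"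
  then obtain p' m' where "p'\<in>Kp" "m'\<in>Km" "p + m = p' + m'" "y = p' - m'" by blast
  hence "p = p' \<and> m = m'" using uniq[OF assms, of p' m'] by blast
  thus "y = p - m" using \<open>y = p' - m'\<close> by simp
qed

lemma decomp: "\<exists>p\<in>Kp. \<exists>m\<in>Km. x = p + m"
proof -
  have "\<forall>x. \<exists>p\<in>Kp. \<exists>m\<in>Km. x = p + m" using fd unfolding fundamental_decomposition_def by (elim conjE)
  thus ?thesis by (rule spec)
qed

lemma JJ: "fund_sym Kp Km (fund_sym Kp Km x) = x"
proof -
  obtain p m where pm: "p\<in>Kp" "m\<in>Km" "x = p + m" using decomp by blast
  have "- m \<in> Km" by (rule sub_neg[OF vs subm pm(2)])
  have e1: "fund_sym Kp Km x = p + - m" using J_eq[OF pm(1,2)] unfolding pm(3) diff_conv_add_uminus .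
  have "fund_sym Kp Km (fund_sym Kp Km x) = fund_sym Kp Km (p + - m)" by (simp only: e1)
  also have "\<dots> = p - - m" by (rule J_eq[OF pm(1) \<open>- m \<in> Km\<close>])
  also have "\<dots> = x" using pm(3) by simp
  finally show ?thesis .
qed

lemma hA: "\<forall>x y z. ip (x + y) z = ip x z + ip y z"
  using herm unfolding hermitian_form_def by (elim conjE)
lemma hS: "\<forall>(c::complex) x z. ip (sc c x) z = c * ip x z"
  using herm unfolding hermitian_form_def by (elim conjE)
lemma hC: "\<forall>x y. ip x y = cnj (ip y x)"
  using herm unfolding hermitian_form_def by (elim conjE)
lemma h1: "ip x y = cnj (ip y x)" by (rule hC[rule_format]) 
lemma ip_add1: "ip (x + y) z = ip x z + ip y z" by (rule hA[rule_format]) 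

lemma ip_add2: "ip a (b + c) = ip a b + ip a c"
proof -
  have "ip a (b + c) = cnj (ip (b + c) a)" by (rule h1)
  also have "\<dots> = cnj (ip b a) + cnj (ip c a)" by (simp only: ip_add1 complex_cnj_add)
  also have "\<dots> = ip a b + ip a c" by (simp add: h1[of a b] h1[of a c])
  finally show ?thesis .
qed

lemma ip_neg1: "ip (- b) a = - ip b a"
proof -
  have h: "\<And>c x z. ip (sc c x) z = c * ip x z" by (rule hS[rule_format])
  have "ip (- b) a = ip (sc (-1) b) a" using neg_sc[OF vs, of b] by simp
  also have "\<dots> = - ip b a" by (simp add: h)
  finally show ?thesis .
qed

lemma ip_neg2: "ip a (- b) = - ip a b"
proof -
  have "ip a (- b) = cnj (ip (- b) a)" by (rule h1)
  also have "\<dots> = - cnj (ip b a)" by (simp add: ip_neg1)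
  also have "\<dots> = - ip a b" by (simp add: h1[of a b])
  finally show ?thesis .
qed


lemma ip_diff1: "ip (b - c) a = ip b a - ip c a"
  by (simp only: diff_conv_add_uminus ip_add1 ip_neg1)
lemma ip_diff2: "ip a (b - c) = ip a b - ip a c"
  by (simp only: diff_conv_add_uminus ip_add2 ip_neg2)

lemma selfadj: "ip (fund_sym Kp Km y) x = ip y (fund_sym Kp Km x)"
proof -
  obtain p m where pm: "p\<in>Kp" "m\<in>Km" "y = p + m" using decomp by blast
  obtain p' m' where pm': "p'\<in>Kp" "m'\<in>Km" "x = p' + m'" using decomp by blast
  have orth: "\<forall>p\<in>Kp. \<forall>m\<in>Km. ip p m = 0" using fd unfolding fundamental_decomposition_def by (elim conjE)
  have o1: "ip p m' = 0" "ip p' m = 0" using orth pm(1,2) pm'(1,2) by blast+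
  have o2: "ip m p' = 0" using h1[of m p'] o1(2) by simp
  have "ip (fund_sym Kp Km y) x = ip (p - m) (p' + m')" using pm pm' J_eq by simp
  also have "\<dots> = ip p p' + ip p m' - (ip m p' + ip m m')"
    by (simp only: ip_diff1 ip_add2) (simp add: algebra_simps)
  also have "\<dots> = ip p p' - ip m m'" using o1 o2 by simp
  also have "\<dots> = ip p p' - ip p m' + (ip m p' - ip m m')" using o1 o2 by simp
  also have "\<dots> = ip (p + m) (p' - m')"
    by (simp only: ip_add1 ip_diff2) (simp add: algebra_simps)
  also have "\<dots> = ip y (fund_sym Kp Km x)" using pm pm' J_eq by simp
  finally show ?thesis .
qed

lemma Jnorm_J: "J_norm ip Kp Km (fund_sym Kp Km x) = J_norm ip Kp Km x"
  unfolding J_norm_def J_inner_def JJ using selfadj[of x x] by simp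

end

lemma all_inv: assumes "\<And>x. J (J x) = x" shows "(\<forall>x. P (J x)) \<longleftrightarrow> (\<forall>x. P x)"
proof
  assume h: "\<forall>x. P (J x)"
  show "\<forall>x. P x"
  proof
    fix x have "P (J (J x))" using h by blast
    thus "P x" using assms by simp
  qed
qed simp

theorem theorem3p3:
  fixes sc :: "complex \<Rightarrow> 'a::ab_group_add \<Rightarrow> 'a"
    and ip :: "'a \<Rightarrow> 'a \<Rightarrow> complex"
    and Kp Km :: "'a set" and k :: "nat \<Rightarrow> 'a" and A B :: real
  assumes "krein_space sc ip Kp Km"
    and "0 < A" and "A \<le> B"
  defines "J \<equiv> fund_sym Kp Km"
  shows "(krein_frame ip Kp Km k A B \<longleftrightarrow> krein_frame ip Kp Km (\<lambda>n. J (k n)) A B) \<and>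
         (krein_frame ip Kp Km k A B \<longleftrightarrow> hilbert_frame (J_inner ip Kp Km) k A B) \<and>
         (krein_frame ip Kp Km k A B \<longleftrightarrow> hilbert_frame (J_inner ip Kp Km) (\<lambda>n. J (k n)) A B)"
proof -
  note K = assms(1)
  have JJ': "\<And>x. J (J x) = x" unfolding J_def using JJ[OF K] .
  have sa: "\<And>y x. ip (J y) x = ip y (J x)" unfolding J_def using selfadj[OF K] .
  have nJ: "\<And>x. J_norm ip Kp Km (J x) = J_norm ip Kp Km x" unfolding J_def using Jnorm_J[OF K] .
  have hn: "\<And>x. sqrt (Re (J_inner ip Kp Km x x)) = J_norm ip Kp Km x" by (simp add: J_norm_def)
  define P where "P = (\<lambda>x. summable (\<lambda>n. (cmod (ip (k n) x))\<^sup>2) \<and>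
          A * (J_norm ip Kp Km x)\<^sup>2 \<le> (\<Sum>n. (cmod (ip (k n) x))\<^sup>2) \<and>
          (\<Sum>n. (cmod (ip (k n) x))\<^sup>2) \<le> B * (J_norm ip Kp Km x)\<^sup>2)"
  have kf: "krein_frame ip Kp Km k A B \<longleftrightarrow> 0 < A \<and> A \<le> B \<and> (\<forall>x. P x)"
    unfolding krein_frame_def P_def by simp
  have 1: "krein_frame ip Kp Km (\<lambda>n. J (k n)) A B \<longleftrightarrow> 0 < A \<and> A \<le> B \<and> (\<forall>x. P (J x))"
    unfolding krein_frame_def P_def sa nJ by simp
  have 2: "hilbert_frame (J_inner ip Kp Km) k A B \<longleftrightarrow> 0 < A \<and> A \<le> B \<and> (\<forall>x. P (J x))"
    unfolding hilbert_frame_def P_def hn unfolding J_inner_def J_def[symmetric] nJ by simp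
  have 3: "hilbert_frame (J_inner ip Kp Km) (\<lambda>n. J (k n)) A B \<longleftrightarrow> 0 < A \<and> A \<le> B \<and> (\<forall>x. P x)"
    unfolding hilbert_frame_def P_def hn unfolding J_inner_def J_def[symmetric] sa JJ' by simp
  show ?thesis unfolding kf 1 2 3 all_inv[of J P, OF JJ'] by (rule TrueI conjI refl)+
qed

end
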